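(* Let $n\ge 1$ and let $\alpha\in IS_n$ be a non-zero idempotent of rank $k$ (i.e. $|\operatorname{im}\alpha|=k$). Then the degree of the vertex $L_\alpha$ in $\mathcal{SP}_L(IS_n)$ equals $2^n-2^{n-k}-1$.
   Context: $IS_n$ is the set of all partial injective maps of an $n$-element set $X$, with composition written left to right ($\alpha\beta$ means first $\alpha$, then $\beta$); its zero is the empty map; its idempotents are the partial identities on subsets of $X$. For $a\in IS_n$, $S^1a=\{sa:s\in IS_n\}\cup\{a\}$. $\mathcal{P}_L(IS_n)$ is the simple graph on the non-empty partial injections with distinct $a,b$ adjacent iff $S^1a\cap S^1b$ contains a non-empty map. $L_a$ is the Green $\mathcal{L}$-class of $a$ ($a\,\mathcal{L}\,b$ iff $S^1a=S^1b$). $\mathcal{SP}_L(IS_n)$ is the simple graph with vertex set $\{L_a: a \text{ non-empty}\}$, distinct $L_a,L_b$ adjacent iff $a,b$ are adjacent in $\mathcal{P}_L(IS_n)$. *)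

theory Defs
  imports Main
begin

text \<open>Partial injective maps of the n-element set X = {0..<n}, as partial functions.\<close>

type_synonym pinj = "nat \<rightharpoonup> nat"

definition IS :: "nat \<Rightarrow> pinj set" where
  "IS n = {f. dom f \<subseteq> {..<n} \<and> ran f \<subseteq> {..<n} \<and> inj_on f (dom f)}"

text \<open>Left-to-right composition: pcomp a b means first a, then b.\<close>
definition pcomp :: "pinj \<Rightarrow> pinj \<Rightarrow> pinj" where
  "pcomp a b = b \<circ>\<^sub>m a"

definition S1 :: "nat \<Rightarrow> pinj \<Rightarrow> pinj set" where
  "S1 n a = {pcomp s a | s. s \<in> IS n} \<union> {a}"

definition PL_adj :: "nat \<Rightarrow> pinj \<Rightarrow> pinj \<Rightarrow> bool" where
  "PL_adj n a b \<longleftrightarrow> a \<in> IS n \<and> b \<in> IS n \<and> a \<noteq> Map.empty \<and> b \<noteq> Map.empty \<and> a \<noteq> b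
     \<and> (\<exists>c \<in> S1 n a \<inter> S1 n b. c \<noteq> Map.empty)"

definition Lclass :: "nat \<Rightarrow> pinj \<Rightarrow> pinj set" where
  "Lclass n a = {b \<in> IS n. S1 n b = S1 n a}"

definition SP_vertices :: "nat \<Rightarrow> pinj set set" where
  "SP_vertices n = {Lclass n a | a. a \<in> IS n \<and> a \<noteq> Map.empty}"

definition SP_adj :: "nat \<Rightarrow> pinj set \<Rightarrow> pinj set \<Rightarrow> bool" where
  "SP_adj n X Y \<longleftrightarrow> X \<in> SP_vertices n \<and> Y \<in> SP_vertices n \<and> X \<noteq> Y
     \<and> (\<exists>a \<in> X. \<exists>b \<in> Y. PL_adj n a b)"

definition SP_degree :: "nat \<Rightarrow> pinj set \<Rightarrow> nat" where
  "SP_degree n X = card {Y. SP_adj n X Y}"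

end

theory Submission
  imports Defs
begin

lemma IS_pcomp:
  assumes a: "a \<in> IS n" and b: "b \<in> IS n" shows "pcomp a b \<in> IS n"
  unfolding IS_def
proof (intro CollectI conjI)
  show "dom (pcomp a b) \<subseteq> {..<n}" using a
    unfolding IS_def pcomp_def dom_def by (force simp: map_comp_Some_iff)
  show "ran (pcomp a b) \<subseteq> {..<n}" using b
    unfolding IS_def pcomp_def ran_def by (force simp: map_comp_Some_iff)
  show "inj_on (pcomp a b) (dom (pcomp a b))"
  proof (rule inj_onI)
    fix x1 x2 assume "x1 \<in> dom (pcomp a b)" "x2 \<in> dom (pcomp a b)" "pcomp a b x1 = pcomp a b x2"
    then obtain y1 y2 z where y: "a x1 = Some y1" "a x2 = Some y2" "b y1 = Some z" "b y2 = Some z"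
      unfolding pcomp_def dom_def by (auto simp: map_comp_Some_iff)
    have ib: "inj_on b (dom b)" and ia: "inj_on a (dom a)" using a b by (auto simp: IS_def)
    have "y1 = y2" using inj_onD[OF ib] y by (metis domI)
    then show "x1 = x2" using inj_onD[OF ia] y by (metis domI)
  qed
qed

lemma pcomp_assoc: "pcomp t (pcomp s b) = pcomp (pcomp t s) b"
  unfolding pcomp_def by (rule ext) (auto simp: map_comp_def split: option.splits)

lemma ran_pcomp: "ran (pcomp s a) \<subseteq> ran a"
  unfolding pcomp_def ran_def by (auto simp: map_comp_Some_iff)

lemma S1_ran: "f \<in> S1 n a \<Longrightarrow> ran f \<subseteq> ran a"
  unfolding S1_def using ran_pcomp by auto

lemma factor:
  assumes a: "a \<in> IS n" and b: "b \<in> IS n" and r: "ran a \<subseteq> ran b"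
  shows "\<exists>s\<in>IS n. pcomp s b = a"
proof -
  define g where "g = (\<lambda>y. SOME z. b z = Some y)"
  define s where "s = (\<lambda>x. map_option g (a x))"
  have sp: "b (g y) = Some y" if "y \<in> ran b" for y
  proof -
    from that obtain z where "b z = Some y" unfolding ran_def by blast
    then show ?thesis unfolding g_def by (rule someI)
  qed
  have ya: "y \<in> ran b" if "a x = Some y" for x y
  proof -
    have "y \<in> ran a" using that unfolding ran_def by blast
    then show ?thesis using r by blast
  qed
  have eq: "pcomp s b = a"
  proof (rule ext)
    fix x show "pcomp s b x = a x"
    proof (cases "a x")
      case None then show ?thesis by (simp add: pcomp_def s_def)
    next
      case (Some y)
      then have "b (g y) = Some y" by (rule sp[OF ya])
      then show ?thesis using Some by (simp add: pcomp_def s_def)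
    qed
  qed
  have ia: "inj_on a (dom a)" and da: "dom a \<subseteq> {..<n}" and db: "dom b \<subseteq> {..<n}"
    using a b unfolding IS_def by auto
  have "s \<in> IS n"
    unfolding IS_def
  proof (intro CollectI conjI)
    have "dom s = dom a" unfolding s_def dom_def by simp
    then show "dom s \<subseteq> {..<n}" using da by simp
    show "ran s \<subseteq> {..<n}"
    proof
      fix z assume "z \<in> ran s"
      then obtain x where "s x = Some z" unfolding ran_def by blast
      then obtain y where y: "a x = Some y" "z = g y" by (cases "a x") (auto simp: s_def)
      then have "b z = Some y" using sp[OF ya[OF y(1)]] by simp
      then have "z \<in> dom b" by blast
      then show "z \<in> {..<n}" using db by blast
    qed
    show "inj_on s (dom s)"
    proof (rule inj_onI)
      fix x1 x2 assume d: "x1 \<in> dom s" "x2 \<in> dom s" and e: "s x1 = s x2"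
      have "dom s = dom a" unfolding s_def dom_def by simp
      with d obtain y1 y2 where y1: "a x1 = Some y1" and y2: "a x2 = Some y2" by auto
      have "g y1 = g y2" using e y1 y2 unfolding s_def by simp
      moreover have "b (g y1) = Some y1" "b (g y2) = Some y2" by (rule sp[OF ya[OF y1]], rule sp[OF ya[OF y2]])
      ultimately have "Some y1 = Some y2" by metis
      then have "y1 = y2" by (rule option.inject[THEN iffD1])
      then have "a x1 = a x2" using y1 y2 by simp
      moreover have "x1 \<in> dom a" "x2 \<in> dom a" using y1 y2 by blast+
      ultimately show "x1 = x2" using ia unfolding inj_on_def by blast
    qed
  qed
  with eq show ?thesis by blast
qed

lemma S1_mono:
  assumes a: "a \<in> IS n" and b: "b \<in> IS n" and r: "ran a \<subseteq> ran b"
  shows "S1 n a \<subseteq> S1 n b"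
proof
  obtain s where s: "s \<in> IS n" "pcomp s b = a" using factor[OF a b r] by blast
  fix f assume "f \<in> S1 n a"
  then consider "f = a" | t where "t \<in> IS n" "f = pcomp t a" unfolding S1_def by blast
  then show "f \<in> S1 n b"
  proof cases
    case 1 then show ?thesis using s unfolding S1_def by blast
  next
    case 2 then show ?thesis using s IS_pcomp[of t n s] pcomp_assoc[of t s b]
      unfolding S1_def by auto
  qed
qed

lemma S1_eq_iff:
  assumes "a \<in> IS n" "b \<in> IS n"
  shows "S1 n a = S1 n b \<longleftrightarrow> ran a = ran b"
proof
  assume "S1 n a = S1 n b"
  then have "a \<in> S1 n b" "b \<in> S1 n a" unfolding S1_def by auto
  then show "ran a = ran b" using S1_ran by blast
next
  assume "ran a = ran b" then show "S1 n a = S1 n b"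
    using S1_mono assms by (metis order_refl subset_antisym)
qed

lemma Lclass_eq: "a \<in> IS n \<Longrightarrow> Lclass n a = {b \<in> IS n. ran b = ran a}"
  unfolding Lclass_def using S1_eq_iff by blast

lemma Lclass_eq_iff: "a \<in> IS n \<Longrightarrow> b \<in> IS n \<Longrightarrow> Lclass n a = Lclass n b \<longleftrightarrow> ran a = ran b"
  by (auto simp: Lclass_eq)

lemma PL_adj_iff:
  assumes "a \<in> IS n" "b \<in> IS n" "a \<noteq> Map.empty" "b \<noteq> Map.empty" "a \<noteq> b"
  shows "PL_adj n a b \<longleftrightarrow> ran a \<inter> ran b \<noteq> {}"
proof
  assume "PL_adj n a b"
  then obtain c where c: "c \<in> S1 n a" "c \<in> S1 n b" "c \<noteq> Map.empty" unfolding PL_adj_def by blast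
  then obtain x y where "c x = Some y" by fastforce
  then have "y \<in> ran c" by (auto simp: ran_def)
  with c S1_ran show "ran a \<inter> ran b \<noteq> {}" by blast
next
  assume "ran a \<inter> ran b \<noteq> {}"
  then obtain y where y: "y \<in> ran a" "y \<in> ran b" by blast
  have yn: "y < n" using y assms(1) by (auto simp: IS_def)
  define c :: pinj where "c = [y \<mapsto> y]"
  have c: "c \<in> IS n" using yn by (auto simp: c_def IS_def)
  have rc: "ran c = {y}" by (simp add: c_def)
  obtain s where "s \<in> IS n" "pcomp s a = c" using factor[OF c assms(1)] rc y by auto
  then have "c \<in> S1 n a" unfolding S1_def by blast
  moreover obtain t where "t \<in> IS n" "pcomp t b = c" using factor[OF c assms(2)] rc y by auto
  then have "c \<in> S1 n b" unfolding S1_def by blast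
  moreover have "c \<noteq> Map.empty" by (simp add: c_def)
  ultimately show "PL_adj n a b" using assms unfolding PL_adj_def by blast
qed

definition idB :: "nat set \<Rightarrow> pinj" where
  "idB B = (\<lambda>x. if x \<in> B then Some x else None)"

lemma idB_IS: "B \<subseteq> {..<n} \<Longrightarrow> idB B \<in> IS n"
  by (auto simp: idB_def IS_def dom_def ran_def inj_on_def split: if_splits)

lemma ran_idB: "ran (idB B) = B"
  by (auto simp: idB_def ran_def split: if_splits)

lemma ran_IS: "a \<in> IS n \<Longrightarrow> ran a \<subseteq> {..<n}"
  by (auto simp: IS_def)

lemma ran_empty_iff: "ran a = {} \<longleftrightarrow> a = Map.empty"
  by (auto simp: ran_def) (metis not_None_eq)

lemma card_count:
  assumes "A \<subseteq> {..<n}" "A \<noteq> {}" "card A = k"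
  shows "card {B. B \<subseteq> {..<n} \<and> B \<noteq> A \<and> B \<inter> A \<noteq> {}} = 2 ^ n - 2 ^ (n - k) - 1"
proof -
  have fA: "finite A" using assms(1) finite_subset by blast
  have e1: "{B. B \<subseteq> {..<n} \<and> B \<inter> A \<noteq> {}} = Pow {..<n} - Pow ({..<n} - A)" by auto
  have c1: "card (Pow {..<n} - Pow ({..<n} - A)) = 2 ^ n - 2 ^ (n - k)"
    using assms fA by (subst card_Diff_subset) (auto simp: card_Pow card_Diff_subset)
  have e2: "{B. B \<subseteq> {..<n} \<and> B \<noteq> A \<and> B \<inter> A \<noteq> {}} = {B. B \<subseteq> {..<n} \<and> B \<inter> A \<noteq> {}} - {A}"
    by auto
  have "A \<in> {B. B \<subseteq> {..<n} \<and> B \<inter> A \<noteq> {}}" using assms by auto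
  then show ?thesis unfolding e2 using c1 e1
    by (subst card_Diff_singleton) (auto simp: e1)
qed

theorem mainTheorem14:
  fixes n k :: nat and \<alpha> :: pinj
  assumes "n \<ge> 1"
    and "\<alpha> \<in> IS n"
    and "\<alpha> \<noteq> Map.empty"
    and "pcomp \<alpha> \<alpha> = \<alpha>"
    and "card (ran \<alpha>) = k"
  shows "SP_degree n (Lclass n \<alpha>) = 2 ^ n - 2 ^ (n - k) - 1"
proof -
  let ?A = "ran \<alpha>"
  let ?F = "\<lambda>B. Lclass n (idB B)"
  let ?S = "{B. B \<subseteq> {..<n} \<and> B \<noteq> ?A \<and> B \<inter> ?A \<noteq> {}}"
  have al: "\<alpha> \<in> IS n" by (rule assms(2))
  have A: "?A \<subseteq> {..<n}" "?A \<noteq> {}"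
    using ran_IS[OF al] ran_empty_iff[of \<alpha>] assms(3) by auto
  have F_ran: "?F B = ?F C \<longleftrightarrow> B = C" if "B \<subseteq> {..<n}" "C \<subseteq> {..<n}" for B C
    using Lclass_eq_iff[OF idB_IS[OF that(1)] idB_IS[OF that(2)]] by (simp add: ran_idB)
  have inj: "inj_on ?F ?S"
  proof (rule inj_onI)
    fix B C assume "B \<in> ?S" "C \<in> ?S" "?F B = ?F C"
    then show "B = C" using F_ran by blast
  qed
  have eq: "{Y. SP_adj n (Lclass n \<alpha>) Y} = ?F ` ?S"
  proof (intro set_eqI iffI)
    fix Y assume "Y \<in> {Y. SP_adj n (Lclass n \<alpha>) Y}"
    then have adj: "SP_adj n (Lclass n \<alpha>) Y" by simp
    then obtain b where b: "b \<in> IS n" "b \<noteq> Map.empty" "Y = Lclass n b"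
      unfolding SP_adj_def SP_vertices_def by blast
    from adj obtain a' b' where ab: "a' \<in> Lclass n \<alpha>" "b' \<in> Y" "PL_adj n a' b'"
      "Lclass n \<alpha> \<noteq> Y" unfolding SP_adj_def by blast
    have ra: "ran a' = ?A" "a' \<in> IS n" using ab(1) Lclass_eq[OF al] by auto
    have rb: "ran b' = ran b" "b' \<in> IS n" using ab(2) b(3) Lclass_eq[OF b(1)] by auto
    have pa: "a' \<noteq> Map.empty" "b' \<noteq> Map.empty" "a' \<noteq> b'" using ab(3) unfolding PL_adj_def by auto
    have "ran a' \<inter> ran b' \<noteq> {}" using PL_adj_iff[OF ra(2) rb(2) pa] ab(3) by simp
    then have i1: "ran b \<inter> ?A \<noteq> {}" using ra rb by auto
    have i2: "ran b \<noteq> ?A" using ab(4) b(3) Lclass_eq_iff[OF al b(1)] by auto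
    have rbn: "ran b \<subseteq> {..<n}" by (rule ran_IS[OF b(1)])
    have "Lclass n b = ?F (ran b)"
      using Lclass_eq_iff[OF b(1) idB_IS[OF rbn]] by (simp add: ran_idB)
    then have i3: "Y = ?F (ran b)" using b(3) by simp
    have "ran b \<in> ?S" using i1 i2 rbn by blast
    then show "Y \<in> ?F ` ?S" using i3 by blast
  next
    fix Y assume "Y \<in> ?F ` ?S"
    then obtain B where B: "B \<subseteq> {..<n}" "B \<noteq> ?A" "B \<inter> ?A \<noteq> {}" "Y = ?F B" by blast
    have bI: "idB B \<in> IS n" using idB_IS[OF B(1)] .
    have rB: "ran (idB B) = B" by (rule ran_idB)
    have bne: "idB B \<noteq> Map.empty"
    proof
      assume "idB B = Map.empty"
      then have "B = {}" using rB by simp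
      then show False using B(3) by simp
    qed
    have neq: "\<alpha> \<noteq> idB B" using B(2) rB by auto
    have Yv: "Y \<in> SP_vertices n" using B(4) bI bne unfolding SP_vertices_def by blast
    have Xv: "Lclass n \<alpha> \<in> SP_vertices n" using assms(2,3) unfolding SP_vertices_def by blast
    have XY: "Lclass n \<alpha> \<noteq> Y" using B(2,4) Lclass_eq_iff[OF al bI] rB by auto
    have "PL_adj n \<alpha> (idB B)" using PL_adj_iff[OF al bI assms(3) bne neq] B(3) rB by auto
    moreover have "\<alpha> \<in> Lclass n \<alpha>" "idB B \<in> Y" using al bI B(4) unfolding Lclass_def by auto
    ultimately have "SP_adj n (Lclass n \<alpha>) Y"
      using Yv Xv XY unfolding SP_adj_def by blast
    then show "Y \<in> {Y. SP_adj n (Lclass n \<alpha>) Y}" by simp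
  qed
  have "SP_degree n (Lclass n \<alpha>) = card ?S"
    unfolding SP_degree_def eq using inj by (rule card_image)
  also have "\<dots> = 2 ^ n - 2 ^ (n - k) - 1" using card_count[OF A assms(5)] .
  finally show ?thesis .
qed

end
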